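(* Let $D$ be a consistent domain, $(M,s)$ a state, and $a$ an announcement action with "$a$ announces $\varphi$" in $D$. Assume $(M,s)$ is consistency preserving for $a$, $a$ is executable in $(M,s)$, $(M,s)\models\varphi$, and $\Phi^a_D(a,(M,s))=\{(M',s')\}$. Then: (1) $(M',s')\models\mathbf C_{F_D(a,M,s)}\varphi$; (2) $(M',s')\models\mathbf C_{P_D(a,M,s)}\big(\mathbf C_{F_D(a,M,s)}\varphi\vee\mathbf C_{F_D(a,M,s)}\neg\varphi\big)$; (3) for every $i\in O_D(a,M,s)$ and every belief formula $\psi$, $(M',s')\models\mathbf B_i\psi$ iff $(M,s)\models\mathbf B_i\psi$.
   Context: Fix a finite set of agents $\mathcal{AG}=\{1,\dots,n\}$, a set $\mathcal F$ of fluents and a set of actions. Belief formulae are built from propositional (fluent) formulae over $\mathcal F$ using $\mathbf B_i\varphi$, Boolean connectives, and $\mathbf E_\alpha\varphi,\mathbf C_\alpha\varphi$ ($\emptyset\ne\alpha\subseteq\mathcal{AG}$). A Kripke structure $M$ has worlds $M[S]$, interpretations $M[\pi](u)\subseteq\mathcal F$ and relations $M[i]\subseteq M[S]\times M[S]$; a state is $(M,s)$, $s\in M[S]$. Satisfaction: fluent formulae are evaluated in $M[\pi](s)$; $(M,s)\models\mathbf B_i\psi$ iff $(M,t)\models\psi$ for all $(s,t)\in M[i]$; Boolean connectives as usual; $\mathbf E_\alpha\psi$ iff $\mathbf B_i\psi$ for all $i\in\alpha$; $\mathbf C_\alpha\psi$ iff $\mathbf E^k_\alpha\psi$ for all $k\ge0$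 ($\mathbf E^0_\alpha\psi=\psi$, $\mathbf E^{k+1}_\alpha\psi=\mathbf E_\alpha\mathbf E^k_\alpha\psi$). A domain $D$ contains for each action $a$ exactly one "executable $a$ if $\chi$" ($\chi$ a belief formula; $a$ executable in $(M,u)$ iff $(M,u)\models\chi$), for announcement actions a single statement "$a$ announces $\varphi$" ($\varphi$ a fluent formula), and observability statements "$X$ observes $a$ if $\theta$", "$X$ aware\_of $a$ if $\theta$" ($\theta$ fluent formulae). $F_D(a,M,s)$ is the set of agents $X$ with some "$X$ observes $a$ if $\theta$" in $D$ and $(M,s)\models\theta$; $P_D(a,M,s)$ likewise with "aware\_of"; $O_D(a,M,s)$ the remaining agents. $D$ is consistent if in particular $F_D\cap P_D=\emptyset$ always. Transition $\Phi^a_D$: if $a$ is executable in $(M,s)$, $\Phi^a_D(a,(M,s))=\{(M',s')\}$ where: let $c$ be a bijection from $M[S]$ onto fresh worlds; $M''$ has worlds $c(u)$ for those $u$ with $(M,u)\models\chi$, with interpretation $M[\pi](u)$; for $i\in F_D(a,M,s)$, $(c(u),c(v))\in M''[i]$ iff both are worlds of $M''$, $(u,v)\in M[i]$ and $M[\pi](u)\models\varphi\Leftrightarrow M[\pi](v)\models\varphi$; for $i\in P_D(a,M,s)$, $(c(u),c(v))\in M''[i]$ iff both are worlds of $M''$ and $(u,v)\in M[i]$; $M''[i]=\emptyset$ for $i\in O_D(a,M,s)$. Then $M'[S]=M[S]\cup M''[S]$ with inherited interpretations, $M'[i]=M[i]\cup M''[i]$ for $i\in F_D\cup P_D$, $M'[i]=M[i]\cup\{(c(u),v)\mid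 c(u)\in M''[S],(u,v)\in M[i]\}$ for $i\in O_D$, and $s'=c(s)$. $(M,s)$ is consistency preserving for $a$ (announcing $\varphi$) if $(M,u)\not\models\mathbf B_i\neg\varphi$ for every $u\in M[S]$ and $i\in F_D(a,M,s)\cup P_D(a,M,s)$. *)

theory Defs
  imports Main
begin

datatype 'f fform =
    FAtom 'f
  | FNot "'f fform"
  | FAnd "'f fform" "'f fform"
  | FOr "'f fform" "'f fform"

primrec fsat :: "'f set \<Rightarrow> 'f fform \<Rightarrow> bool" where
  "fsat I (FAtom p) = (p \<in> I)"
| "fsat I (FNot f) = (\<not> fsat I f)"
| "fsat I (FAnd f g) = (fsat I f \<and> fsat I g)"
| "fsat I (FOr f g) = (fsat I f \<or> fsat I g)"

datatype ('ag, 'f) bform =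
    Fl "'f fform"
  | B 'ag "('ag, 'f) bform"
  | BNot "('ag, 'f) bform"
  | BAnd "('ag, 'f) bform" "('ag, 'f) bform"
  | BOr "('ag, 'f) bform" "('ag, 'f) bform"
  | E "'ag set" "('ag, 'f) bform"
  | C "'ag set" "('ag, 'f) bform"

record ('ag, 'f, 'w) kripke =
  worlds :: "'w set"
  interp :: "'w \<Rightarrow> 'f set"
  rel    :: "'ag \<Rightarrow> ('w \<times> 'w) set"

definition is_kripke :: "('ag, 'f, 'w) kripke \<Rightarrow> bool" where
  "is_kripke M \<longleftrightarrow> (\<forall>i. rel M i \<subseteq> worlds M \<times> worlds M)"

(* Epow M \<alpha> k P u  <->  (M,u) |= E^k_\<alpha> \<psi>, where P is the truth set of \<psi> *)
primrec Epow :: "('ag, 'f, 'w) kripke \<Rightarrow> 'ag set \<Rightarrow> nat \<Rightarrow> ('w \<Rightarrow> bool) \<Rightarrow> 'w \<Rightarrow> bool" where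
  "Epow M \<alpha> 0 P u = P u"
| "Epow M \<alpha> (Suc k) P u = (\<forall>i\<in>\<alpha>. \<forall>v. (u, v) \<in> rel M i \<longrightarrow> Epow M \<alpha> k P v)"

primrec sat :: "('ag, 'f, 'w) kripke \<Rightarrow> 'w \<Rightarrow> ('ag, 'f) bform \<Rightarrow> bool" where
  "sat M u (Fl f) = fsat (interp M u) f"
| "sat M u (B i \<psi>) = (\<forall>v. (u, v) \<in> rel M i \<longrightarrow> sat M v \<psi>)"
| "sat M u (BNot \<psi>) = (\<not> sat M u \<psi>)"
| "sat M u (BAnd \<psi> \<chi>) = (sat M u \<psi> \<and> sat M u \<chi>)"
| "sat M u (BOr \<psi> \<chi>) = (sat M u \<psi> \<or> sat M u \<chi>)"
| "sat M u (E \<alpha> \<psi>) = (\<forall>i\<in>\<alpha>. \<forall>v. (u, v) \<in> rel M i \<longrightarrow> sat M v \<psi>)"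
| "sat M u (C \<alpha> \<psi>) = (\<forall>k. Epow M \<alpha> k (\<lambda>v. sat M v \<psi>) u)"

record ('ag, 'f, 'act) domain =
  exec      :: "'act \<Rightarrow> ('ag, 'f) bform"
  announces :: "'act \<Rightarrow> 'f fform option"
  observes  :: "('ag \<times> 'act \<times> 'f fform) set"      (* X observes a if \<theta> *)
  aware     :: "('ag \<times> 'act \<times> 'f fform) set"      (* X aware_of a if \<theta> *)

definition FD :: "('ag, 'f, 'act) domain \<Rightarrow> 'act \<Rightarrow> ('ag, 'f, 'w) kripke \<Rightarrow> 'w \<Rightarrow> 'ag set" where
  "FD D a M s = {X. \<exists>\<theta>. (X, a, \<theta>) \<in> observes D \<and> fsat (interp M s) \<theta>}"

definition PD :: "('ag, 'f, 'act) domain \<Rightarrow> 'act \<Rightarrow> ('ag, 'f, 'w) kripke \<Rightarrow> 'w \<Rightarrow> 'ag set" where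
  "PD D a M s = {X. \<exists>\<theta>. (X, a, \<theta>) \<in> aware D \<and> fsat (interp M s) \<theta>}"

definition OD :: "('ag, 'f, 'act) domain \<Rightarrow> 'act \<Rightarrow> ('ag, 'f, 'w) kripke \<Rightarrow> 'w \<Rightarrow> 'ag set" where
  "OD D a M s = UNIV - (FD D a M s \<union> PD D a M s)"

definition consistent_domain :: "('ag, 'f, 'act) domain \<Rightarrow> bool" where
  "consistent_domain D \<longleftrightarrow>
     (\<forall>a (M :: ('ag, 'f, 'f set) kripke) s. FD D a M s \<inter> PD D a M s = {})"

definition executable :: "('ag, 'f, 'act) domain \<Rightarrow> 'act \<Rightarrow> ('ag, 'f, 'w) kripke \<Rightarrow> 'w \<Rightarrow> bool" where
  "executable D a M u \<longleftrightarrow> sat M u (exec D a)"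

(* c: the bijection from M[S] onto fresh worlds; \<phi>: the announced formula *)
definition upd_model ::
  "('ag, 'f, 'act) domain \<Rightarrow> 'act \<Rightarrow> 'f fform \<Rightarrow> ('ag, 'f, 'w) kripke \<Rightarrow> 'w \<Rightarrow> ('w \<Rightarrow> 'w)
     \<Rightarrow> ('ag, 'f, 'w) kripke" where
  "upd_model D a \<phi> M s c =
    (let \<chi> = exec D a;
         S2 = {u \<in> worlds M. sat M u \<chi>};
         F = FD D a M s; P = PD D a M s; Ob = OD D a M s;
         R2 = (\<lambda>i. if i \<in> F then
                      {(c u, c v) | u v. u \<in> S2 \<and> v \<in> S2 \<and> (u, v) \<in> rel M i \<and>
                          (fsat (interp M u) \<phi> \<longleftrightarrow> fsat (interp M v) \<phi>)}
                   else if i \<in> P then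
                      {(c u, c v) | u v. u \<in> S2 \<and> v \<in> S2 \<and> (u, v) \<in> rel M i}
                   else {})
     in \<lparr> worlds = worlds M \<union> c ` S2,
          interp = (\<lambda>w. if w \<in> c ` S2 then interp M (the_inv_into (worlds M) c w)
                         else interp M w),
          rel = (\<lambda>i. if i \<in> Ob then
                        rel M i \<union> {(c u, v) | u v. u \<in> S2 \<and> (u, v) \<in> rel M i}
                     else rel M i \<union> R2 i) \<rparr>)"

definition Phi ::
  "('ag, 'f, 'act) domain \<Rightarrow> 'act \<Rightarrow> ('ag, 'f, 'w) kripke \<Rightarrow> 'w \<Rightarrow> ('w \<Rightarrow> 'w)
     \<Rightarrow> (('ag, 'f, 'w) kripke \<times> 'w) set" where
  "Phi D a M s c =
    (case announces D a of
       Some \<phi> \<Rightarrow> (if executable D a M s then {(upd_model D a \<phi> M s c, c s)} else {})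
     | None \<Rightarrow> {})"

definition fresh_bij :: "('ag, 'f, 'w) kripke \<Rightarrow> ('w \<Rightarrow> 'w) \<Rightarrow> bool" where
  "fresh_bij M c \<longleftrightarrow> inj_on c (worlds M) \<and> c ` worlds M \<inter> worlds M = {}"

definition consistency_preserving ::
  "('ag, 'f, 'act) domain \<Rightarrow> 'act \<Rightarrow> 'f fform \<Rightarrow> ('ag, 'f, 'w) kripke \<Rightarrow> 'w \<Rightarrow> bool" where
  "consistency_preserving D a \<phi> M s \<longleftrightarrow>
     (\<forall>u\<in>worlds M. \<forall>i\<in>FD D a M s \<union> PD D a M s. \<not> sat M u (B i (BNot (Fl \<phi>))))"

end

theory Submission
  imports Defs
begin

lemma fresh_notin:
  assumes "fresh_bij M c" "w \<in> worlds M" shows "w \<notin> c ` worlds M"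
  using assms unfolding fresh_bij_def by blast

lemma rel_old:
  assumes "is_kripke M" "fresh_bij M c" "w \<in> worlds M"
  shows "(w,v) \<in> rel (upd_model D a \<phi> M s c) j \<longleftrightarrow> (w,v) \<in> rel M j"
proof -
  have "w \<notin> c ` worlds M" using fresh_notin[OF assms(2,3)] .
  then show ?thesis by (auto simp: upd_model_def Let_def)
qed

lemma interp_old:
  assumes "fresh_bij M c" "w \<in> worlds M"
  shows "interp (upd_model D a \<phi> M s c) w = interp M w"
proof -
  have "w \<notin> c ` worlds M" using fresh_notin[OF assms(1,2)] .
  then show ?thesis by (auto simp: upd_model_def Let_def)
qed

lemma interp_new:
  assumes "fresh_bij M c" "u \<in> worlds M" "sat M u (exec D a)"
  shows "interp (upd_model D a \<phi> M s c) (c u) = interp M u"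
proof -
  have "inj_on c (worlds M)" using assms(1) unfolding fresh_bij_def by blast
  then have "the_inv_into (worlds M) c (c u) = u" using assms(2) by (simp add: the_inv_into_f_f)
  then show ?thesis using assms by (auto simp: upd_model_def Let_def)
qed

lemma rel_new_F:
  assumes "is_kripke M" "fresh_bij M c" "u \<in> worlds M" "i \<in> FD D a M s"
    "(c u, w) \<in> rel (upd_model D a \<phi> M s c) i"
  shows "\<exists>v. v \<in> worlds M \<and> sat M v (exec D a) \<and> w = c v \<and>
            (fsat (interp M u) \<phi> \<longleftrightarrow> fsat (interp M v) \<phi>)"
proof -
  have inj: "inj_on c (worlds M)" using assms(2) unfolding fresh_bij_def by blast
  have nw: "c u \<notin> worlds M" using assms(2,3) unfolding fresh_bij_def by blast
  have nr: "(c u, w) \<notin> rel M i" using nw assms(1) unfolding is_kripke_def by blast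
  have nO: "i \<notin> OD D a M s" using assms(4) unfolding OD_def by blast
  from assms(5) nO nr assms(4) obtain u' v where
    h: "c u = c u'" "w = c v" "u' \<in> worlds M" "v \<in> worlds M" "sat M v (exec D a)"
       "(fsat (interp M u') \<phi> \<longleftrightarrow> fsat (interp M v) \<phi>)"
    by (auto simp: upd_model_def Let_def)
  have "u' = u" using inj h(1,3) assms(3) by (metis inj_on_def)
  then show ?thesis using h by blast
qed

lemma rel_new_P:
  assumes "is_kripke M" "fresh_bij M c" "u \<in> worlds M" "i \<in> PD D a M s"
    "(c u, w) \<in> rel (upd_model D a \<phi> M s c) i"
  shows "\<exists>v. v \<in> worlds M \<and> sat M v (exec D a) \<and> w = c v"
proof -
  have nw: "c u \<notin> worlds M" using assms(2,3) unfolding fresh_bij_def by blast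
  have nr: "(c u, w) \<notin> rel M i" using nw assms(1) unfolding is_kripke_def by blast
  have nO: "i \<notin> OD D a M s" using assms(4) unfolding OD_def by blast
  from assms(5) nO nr assms(4) show ?thesis
    by (auto simp: upd_model_def Let_def split: if_splits)
qed

lemma rel_new_O:
  assumes "is_kripke M" "fresh_bij M c" "u \<in> worlds M" "i \<in> OD D a M s"
  shows "(c u, w) \<in> rel (upd_model D a \<phi> M s c) i \<longleftrightarrow> sat M u (exec D a) \<and> (u, w) \<in> rel M i"
proof -
  have inj: "inj_on c (worlds M)" using assms(2) unfolding fresh_bij_def by blast
  have nw: "c u \<notin> worlds M" using assms(2,3) unfolding fresh_bij_def by blast
  have nr: "(c u, w) \<notin> rel M i" using nw assms(1) unfolding is_kripke_def by blast
  show ?thesis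
  proof
    assume "(c u, w) \<in> rel (upd_model D a \<phi> M s c) i"
    with nr assms(4) obtain u' where "c u = c u'" "u' \<in> worlds M" "sat M u' (exec D a)"
      "(u', w) \<in> rel M i"
      by (auto simp: upd_model_def Let_def)
    moreover have "u' = u" using inj calculation(1,2) assms(3) by (metis inj_on_def)
    ultimately show "sat M u (exec D a) \<and> (u, w) \<in> rel M i" by blast
  next
    assume "sat M u (exec D a) \<and> (u, w) \<in> rel M i"
    then show "(c u, w) \<in> rel (upd_model D a \<phi> M s c) i"
      using assms(3,4) by (auto simp: upd_model_def Let_def)
  qed
qed

lemma Epow_old:
  assumes "is_kripke M" "fresh_bij M c" "\<forall>v\<in>worlds M. P v = Q v" "w \<in> worlds M"
  shows "Epow (upd_model D a \<phi> M s c) \<alpha> k P w = Epow M \<alpha> k Q w"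
  using assms(4)
proof (induction k arbitrary: w)
  case 0 then show ?case using assms(3) by simp
next
  case (Suc k)
  have W: "\<And>i v. (w, v) \<in> rel M i \<Longrightarrow> v \<in> worlds M" using assms(1) unfolding is_kripke_def by blast
  have R: "\<And>i v. (w, v) \<in> rel (upd_model D a \<phi> M s c) i \<longleftrightarrow> (w, v) \<in> rel M i"
    by (rule rel_old[OF assms(1,2) Suc.prems])
  show ?case by (simp only: Epow.simps R) (metis W Suc.IH)
qed

lemma sat_old:
  assumes "is_kripke M" "fresh_bij M c" "w \<in> worlds M"
  shows "sat (upd_model D a \<phi> M s c) w \<psi> = sat M w \<psi>"
  using assms(3)
proof (induction \<psi> arbitrary: w)
  case (Fl x) then show ?case using interp_old[OF assms(2) Fl.prems, of D a \<phi> s] by simp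
next
  case (B i \<psi>)
  have R: "\<And>j v. (w, v) \<in> rel (upd_model D a \<phi> M s c) j \<longleftrightarrow> (w, v) \<in> rel M j"
    by (rule rel_old[OF assms(1,2) B.prems])
  have I: "\<And>j v. (w, v) \<in> rel M j \<Longrightarrow> sat (upd_model D a \<phi> M s c) v \<psi> = sat M v \<psi>"
    using assms(1) B.IH unfolding is_kripke_def by blast
  show ?case by (simp only: sat.simps R) (use I in blast)
next
  case (E \<alpha> \<psi>)
  have R: "\<And>j v. (w, v) \<in> rel (upd_model D a \<phi> M s c) j \<longleftrightarrow> (w, v) \<in> rel M j"
    by (rule rel_old[OF assms(1,2) E.prems])
  have I: "\<And>j v. (w, v) \<in> rel M j \<Longrightarrow> sat (upd_model D a \<phi> M s c) v \<psi> = sat M v \<psi>"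
    using assms(1) E.IH unfolding is_kripke_def by blast
  show ?case by (simp only: sat.simps R) (use I in blast)
next
  case (C \<alpha> \<psi>)
  have "\<forall>v\<in>worlds M. sat (upd_model D a \<phi> M s c) v \<psi> = sat M v \<psi>" using C by blast
  then have "\<And>k. Epow (upd_model D a \<phi> M s c) \<alpha> k (\<lambda>v. sat (upd_model D a \<phi> M s c) v \<psi>) w
     = Epow M \<alpha> k (\<lambda>v. sat M v \<psi>) w"
    by (intro Epow_old[OF assms(1,2) _ C.prems]) simp
  then show ?case by (simp only: sat.simps)
qed auto

lemma CF_pos:
  assumes "is_kripke M" "fresh_bij M c" "u \<in> worlds M" "sat M u (exec D a)"
    "fsat (interp M u) \<phi>"
  shows "Epow (upd_model D a \<phi> M s c) (FD D a M s) k
           (\<lambda>v. fsat (interp (upd_model D a \<phi> M s c) v) \<phi>) (c u)"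
  using assms(3-5)
proof (induction k arbitrary: u)
  case 0 then show ?case using interp_new[OF assms(2) 0(1,2), of \<phi> s] by simp
next
  case (Suc k)
  show ?case
  proof (simp, intro ballI allI impI)
    fix i v assume "i \<in> FD D a M s" "(c u, v) \<in> rel (upd_model D a \<phi> M s c) i"
    from rel_new_F[OF assms(1,2) Suc.prems(1) this] Suc show
      "Epow (upd_model D a \<phi> M s c) (FD D a M s) k (\<lambda>v. fsat (interp (upd_model D a \<phi> M s c) v) \<phi>) v"
      by blast
  qed
qed

lemma CF_neg:
  assumes "is_kripke M" "fresh_bij M c" "u \<in> worlds M" "sat M u (exec D a)"
    "\<not> fsat (interp M u) \<phi>"
  shows "Epow (upd_model D a \<phi> M s c) (FD D a M s) k
           (\<lambda>v. \<not> fsat (interp (upd_model D a \<phi> M s c) v) \<phi>) (c u)"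
  using assms(3-5)
proof (induction k arbitrary: u)
  case 0 then show ?case using interp_new[OF assms(2) 0(1,2), of \<phi> s] by simp
next
  case (Suc k)
  show ?case
  proof (simp, intro ballI allI impI)
    fix i v assume "i \<in> FD D a M s" "(c u, v) \<in> rel (upd_model D a \<phi> M s c) i"
    from rel_new_F[OF assms(1,2) Suc.prems(1) this] Suc show
      "Epow (upd_model D a \<phi> M s c) (FD D a M s) k (\<lambda>v. \<not> fsat (interp (upd_model D a \<phi> M s c) v) \<phi>) v"
      by blast
  qed
qed

lemma CP:
  assumes "is_kripke M" "fresh_bij M c" "u \<in> worlds M" "sat M u (exec D a)"
  shows "Epow (upd_model D a \<phi> M s c) (PD D a M s) k
           (\<lambda>v. sat (upd_model D a \<phi> M s c) v
              (BOr (C (FD D a M s) (Fl \<phi>)) (C (FD D a M s) (BNot (Fl \<phi>))))) (c u)"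
  using assms(3-4)
proof (induction k arbitrary: u)
  case 0 then show ?case
    using CF_pos[OF assms(1,2) 0(1,2), of \<phi> s] CF_neg[OF assms(1,2) 0(1,2), of \<phi> s]
    by (cases "fsat (interp M u) \<phi>") simp_all
next
  case (Suc k)
  show ?case
  proof (simp only: Epow.simps, intro ballI allI impI)
    fix i v assume "i \<in> PD D a M s" "(c u, v) \<in> rel (upd_model D a \<phi> M s c) i"
    from rel_new_P[OF assms(1,2) Suc.prems(1) this] Suc show
      "Epow (upd_model D a \<phi> M s c) (PD D a M s) k (\<lambda>v. sat (upd_model D a \<phi> M s c) v
              (BOr (C (FD D a M s) (Fl \<phi>)) (C (FD D a M s) (BNot (Fl \<phi>))))) v"
      by blast
  qed
qed

theorem proposition4:
  fixes D :: "('ag::finite, 'f, 'act) domain"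
    and M M' :: "('ag, 'f, 'w) kripke"
    and s s' :: 'w and a :: 'act and \<phi> :: "'f fform" and c :: "'w \<Rightarrow> 'w"
  assumes "consistent_domain D"
    and "is_kripke M" and "s \<in> worlds M"
    and "announces D a = Some \<phi>"
    and "consistency_preserving D a \<phi> M s"
    and "executable D a M s"
    and "sat M s (Fl \<phi>)"
    and "fresh_bij M c"
    and "Phi D a M s c = {(M', s')}"
  shows "sat M' s' (C (FD D a M s) (Fl \<phi>)) \<and>
         sat M' s' (C (PD D a M s) (BOr (C (FD D a M s) (Fl \<phi>)) (C (FD D a M s) (BNot (Fl \<phi>))))) \<and>
         (\<forall>i\<in>OD D a M s. \<forall>\<psi>. sat M' s' (B i \<psi>) \<longleftrightarrow> sat M s (B i \<psi>))"
proof -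
  have ex: "sat M s (exec D a)" using assms(6) unfolding executable_def .
  have MM: "M' = upd_model D a \<phi> M s c" "s' = c s"
  proof -
    have "Phi D a M s c = {(upd_model D a \<phi> M s c, c s)}"
      unfolding Phi_def using assms(4,6) by simp
    then have "(M', s') = (upd_model D a \<phi> M s c, c s)"
      using assms(9) by (metis singleton_inject)
    then show "M' = upd_model D a \<phi> M s c" "s' = c s" by (simp_all only: prod.inject)
  qed
  have f: "fsat (interp M s) \<phi>" using assms(7) by simp
  have 1: "sat M' s' (C (FD D a M s) (Fl \<phi>))"
    unfolding MM sat.simps(7)[of _ _ "FD D a M s"] sat.simps(1)
    using CF_pos[OF assms(2,8,3) ex f] by blast
  have 2: "sat M' s' (C (PD D a M s) (BOr (C (FD D a M s) (Fl \<phi>)) (C (FD D a M s) (BNot (Fl \<phi>)))))"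
    unfolding MM sat.simps(7)[of _ _ "PD D a M s"]
    using CP[OF assms(2,8,3) ex] by blast
  have 3: "sat M' s' (B i \<psi>) \<longleftrightarrow> sat M s (B i \<psi>)" if "i \<in> OD D a M s" for i \<psi>
  proof -
    have R: "\<And>w. (s', w) \<in> rel M' i \<longleftrightarrow> (s, w) \<in> rel M i"
      unfolding MM using rel_new_O[OF assms(2,8,3) that] ex by simp
    have I: "sat M' v \<psi> = sat M v \<psi>" if "(s, v) \<in> rel M i" for v
    proof -
      have "v \<in> worlds M" using that assms(2) unfolding is_kripke_def by blast
      then show ?thesis unfolding MM by (rule sat_old[OF assms(2,8)])
    qed
    show ?thesis by (simp only: sat.simps R) (use I in blast)
  qed
  show ?thesis using 1 2 3 by blast
qed

end
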